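(* For every integer $n\ge 0$, \[ p_n(x) = 2^n\sum_{k=0}^n\binom{n+1}{k} F_{n-k}(x,1/2)\,F_k(x,1/2). \]
   Context: Define polynomial sequences $(p_k(x))_{k\ge -1}$ and $(q_k(x))_{k\ge -1}$ by $p_{-1}(x)=0$, $q_{-1}(x)=1$ and, for $k\ge -1$, $p_{k+1}(x) = 2(kx+1)p_k(x) + 2x(1-x)p_k'(x) + q_k(x)$, $q_{k+1}(x) = (2(k+1)x+1)q_k(x) + 2x(1-x)q_k'(x)$. For a permutation $\pi=\pi_1\cdots\pi_n$ of $[n]=\{1,\dots,n\}$, let $\mathrm{exc}(\pi)=|\{i\in[n]:\pi_i>i\}|$ and $\mathrm{cyc}(\pi)$ the number of cycles in its disjoint cycle decomposition. The bivariate Eulerian polynomials are $F_0(x,y)=1$ and $F_n(x,y)=\sum_{\pi\in\mathfrak S_n} x^{\mathrm{exc}(\pi)}y^{\mathrm{cyc}(\pi)}$ for $n>0$, where $\mathfrak S_n$ is the symmetric group on $[n]$; their exponential generating function is $\sum_{n\ge0}F_n(x,y)t^n/n! = \left(\frac{1-x}{e^{t(x-1)}-x}\right)^y$. *)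

theory Defs
  imports "HOL-Computational_Algebra.Polynomial" "HOL-Combinatorics.Combinatorics"
begin

text \<open>pq m = (p_(m-1), q_(m-1)): index shifted by one so that pq 0 = (p_(-1), q_(-1)).
  The step pq (Suc m) uses k = m - 1.\<close>
fun pq :: "nat \<Rightarrow> real poly \<times> real poly" where
  "pq 0 = (0, 1)"
| "pq (Suc m) =
     (let p = fst (pq m); q = snd (pq m); k = real m - 1 in
       (smult 2 [:1, k:] * p + smult 2 [:0, 1, -1:] * pderiv p + q,
        [:1, 2 * (k + 1):] * q + smult 2 [:0, 1, -1:] * pderiv q))"

definition p_poly :: "nat \<Rightarrow> real poly" where
  "p_poly n = fst (pq (Suc n))"

definition q_poly :: "nat \<Rightarrow> real poly" where
  "q_poly n = snd (pq (Suc n))"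

definition exc :: "nat \<Rightarrow> (nat \<Rightarrow> nat) \<Rightarrow> nat" where
  "exc n \<pi> = card {i \<in> {1..n}. \<pi> i > i}"

definition cyc :: "nat \<Rightarrow> (nat \<Rightarrow> nat) \<Rightarrow> nat" where
  "cyc n \<pi> = card ((\<lambda>i. orbit \<pi> i) ` {1..n})"

definition F :: "nat \<Rightarrow> real \<Rightarrow> real \<Rightarrow> real" where
  "F n x y = (if n = 0 then 1 else
     (\<Sum>\<pi> \<in> {\<pi>. \<pi> permutes {1..n}}. x ^ exc n \<pi> * y ^ cyc n \<pi>))"

end

theory Submission
  imports Defs
begin


lemma orbit_not_fixed:
  assumes "permutation \<pi>" "\<pi> a = a" "x \<noteq> a"
  shows "a \<notin> orbit \<pi> x"
proof
  assume "a \<in> orbit \<pi> x"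
  with assms have "x \<in> orbit \<pi> a" by (metis orbit_swap permutation_self_in_orbit)
  moreover have "orbit \<pi> a = {a}" using assms(2) by (simp add: orbit_eq_singleton_iff)
  ultimately show False using assms(3) by simp
qed

lemma orbit_eq_of_mem:
  assumes "permutation f" "y \<in> orbit f x"
  shows "orbit f y = orbit f x"
  using assms by (meson cyclic_on_orbit' orbit_cyclic_eq3)

locale insctx =
  fixes \<pi> :: "nat \<Rightarrow> nat" and S a m
  assumes perm: "\<pi> permutes S" and fin: "finite S" and aS: "a \<notin> S" and mS: "m \<in> S"
begin

definition "\<sigma> = transpose a m \<circ> \<pi>"

lemma pa: "\<pi> a = a" using perm aS by (simp add: permutes_not_in)
lemma am: "a \<noteq> m" using aS mS by auto
lemma ppi: "permutation \<pi>" using perm fin permutation_permutes by blast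
lemma sperm: "\<sigma> permutes insert a S"
  unfolding \<sigma>_def
  by (rule permutes_compose[OF permutes_subset[OF perm] permutes_swap_id]) (use mS in auto)
lemma psig: "permutation \<sigma>" using sperm fin permutation_permutes by blast
lemma sa: "\<sigma> a = m" unfolding \<sigma>_def using pa by simp
lemma pz_a: "z \<noteq> a \<Longrightarrow> \<pi> z \<noteq> a"
  using pa perm by (metis permutes_inv_eq)
lemma step_cases: "z \<noteq> a \<Longrightarrow> (\<pi> z = m \<and> \<sigma> z = a) \<or> (\<pi> z \<noteq> m \<and> \<sigma> z = \<pi> z)"
  unfolding \<sigma>_def using pz_a[of z] by (auto simp: transpose_def)

lemma orbA: assumes "x \<noteq> a" "y \<in> orbit \<pi> x" shows "y \<in> orbit \<sigma> x"
  using assms(2)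
proof induction
  case base
  then show ?case using step_cases[OF assms(1)] sa
    by (metis orbit.base orbit.step)
next
  case (step y)
  have "y \<noteq> a" using step.hyps orbit_not_fixed[OF ppi pa assms(1)] by auto
  then show ?case using step_cases[of y] sa step.IH by (metis orbit.step)
qed

lemma orbB: assumes "x \<noteq> a" "y \<in> orbit \<sigma> x"
  shows "y \<in> orbit \<pi> x \<or> (y = a \<and> m \<in> orbit \<pi> x)"
  using assms(2)
proof induction
  case base
  then show ?case using step_cases[OF assms(1)] by (metis orbit.base)
next
  case (step y)
  show ?case
  proof (cases "y = a")
    case True then show ?thesis using step.IH sa orbit_not_fixed[OF ppi pa assms(1)] by auto
  next
    case False
    then have "y \<in> orbit \<pi> x" using step.IH by auto
    then show ?thesis using step_cases[OF False] by (metis orbit.step)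
  qed
qed

lemma orb_eq: assumes "x \<noteq> a" shows "orbit \<sigma> x - {a} = orbit \<pi> x"
  using orbA[OF assms] orbB[OF assms] orbit_not_fixed[OF ppi pa assms] by blast

lemma cyc_eq: "card ((\<lambda>i. orbit \<sigma> i) ` insert a S) = card ((\<lambda>i. orbit \<pi> i) ` S)"
proof -
  have "orbit \<sigma> a = orbit \<sigma> m" using permutation_orbit_step[OF psig, of a] sa by simp
  then have 1: "(\<lambda>i. orbit \<sigma> i) ` insert a S = (\<lambda>i. orbit \<sigma> i) ` S" using mS by auto
  have inj: "inj_on (\<lambda>U. U - {a}) ((\<lambda>i. orbit \<sigma> i) ` S)"
  proof (rule inj_onI, clarsimp)
    fix i1 i2 assume i: "i1 \<in> S" "i2 \<in> S" and e: "orbit \<sigma> i1 - {a} = orbit \<sigma> i2 - {a}"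
    have "i1 \<in> orbit \<sigma> i1" by (rule permutation_self_in_orbit[OF psig])
    then have "i1 \<in> orbit \<sigma> i2" using e i aS by blast
    then show "orbit \<sigma> i1 = orbit \<sigma> i2" by (rule orbit_eq_of_mem[OF psig])
  qed
  have "card ((\<lambda>i. orbit \<sigma> i) ` S) = card ((\<lambda>U. U - {a}) ` ((\<lambda>i. orbit \<sigma> i) ` S))"
    using card_image[OF inj] by simp
  also have "(\<lambda>U. U - {a}) ` ((\<lambda>i. orbit \<sigma> i) ` S) = (\<lambda>i. orbit \<pi> i) ` S"
    unfolding image_image proof (intro image_cong refl)
    fix x assume "x \<in> S" then show "orbit \<sigma> x - {a} = orbit \<pi> x" using orb_eq aS by metis
  qed
  finally show ?thesis using 1 by simp
qed

end

lemma cyc_fix_gen: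
  assumes perm: "\<pi> permutes S" and fin: "finite S" and aS: "a \<notin> S"
  shows "card ((\<lambda>i. orbit \<pi> i) ` insert a S) = Suc (card ((\<lambda>i. orbit \<pi> i) ` S))"
proof -
  have pa: "\<pi> a = a" using perm aS by (simp add: permutes_not_in)
  have ppi: "permutation \<pi>" using perm fin permutation_permutes by blast
  have "orbit \<pi> a \<notin> (\<lambda>i. orbit \<pi> i) ` S"
  proof
    assume "orbit \<pi> a \<in> (\<lambda>i. orbit \<pi> i) ` S"
    then obtain i where "i \<in> S" "orbit \<pi> a = orbit \<pi> i" by auto
    then show False using orbit_not_fixed[OF ppi pa, of i] aS orbit.base[of \<pi> a] pa by auto
  qed
  then show ?thesis using fin by simp
qed


lemma exc_fix:
  assumes "\<pi> permutes {1..n}"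
  shows "exc (Suc n) \<pi> = exc n \<pi>"
proof -
  have "\<pi> (Suc n) = Suc n" using assms by (simp add: permutes_not_in)
  then have "{i \<in> {1..Suc n}. \<pi> i > i} = {i \<in> {1..n}. \<pi> i > i}"
    by (auto simp: le_Suc_eq)
  then show ?thesis by (simp add: exc_def)
qed

lemma exc_le: "exc n \<pi> \<le> n"
  unfolding exc_def by (metis (no_types, lifting) card_atLeastAtMost card_mono diff_Suc_1 finite_atLeastAtMost mem_Collect_eq subsetI)

lemma exc_ins:
  assumes p: "\<pi> permutes {1..n}" and j: "j \<in> {1..n}"
  shows "exc (Suc n) (transpose (Suc n) (\<pi> j) \<circ> \<pi>) = exc n \<pi> + (if j < \<pi> j then 0 else 1)"
proof -
  define \<sigma> where "\<sigma> = transpose (Suc n) (\<pi> j) \<circ> \<pi>"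
  define A where "A = {i \<in> {1..n}. \<pi> i > i}"
  have pj: "\<pi> j \<in> {1..n}" using permutes_in_image[OF p] j by blast
  have pn: "\<pi> (Suc n) = Suc n" using p by (simp add: permutes_not_in)
  have sj: "\<sigma> j = Suc n" unfolding \<sigma>_def by simp
  have sn: "\<sigma> (Suc n) = \<pi> j" unfolding \<sigma>_def using pn by simp
  have si: "\<sigma> i = \<pi> i" if "i \<in> {1..n}" "i \<noteq> j" for i
  proof -
    have "\<pi> i \<in> {1..n}" using permutes_in_image[OF p] that by blast
    moreover have "\<pi> i \<noteq> \<pi> j" using p that j by (metis permutes_inv_eq)
    ultimately show ?thesis unfolding \<sigma>_def by (auto simp: transpose_def)
  qed
  have eq: "{i \<in> {1..Suc n}. \<sigma> i > i} = (if j < \<pi> j then A else insert j A)"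
  proof (intro set_eqI iffI)
    fix i assume "i \<in> {i \<in> {1..Suc n}. \<sigma> i > i}"
    then show "i \<in> (if j < \<pi> j then A else insert j A)"
      using sj sn si pj j unfolding A_def by (cases "i = Suc n"; cases "i = j") (auto simp: le_Suc_eq)
  next
    fix i assume "i \<in> (if j < \<pi> j then A else insert j A)"
    then show "i \<in> {i \<in> {1..Suc n}. \<sigma> i > i}"
      using sj sn si pj j unfolding A_def by (cases "i = j") (auto split: if_splits)
  qed
  have "finite A" unfolding A_def by simp
  moreover have "\<not> j < \<pi> j \<Longrightarrow> j \<notin> A" unfolding A_def by auto
  ultimately show ?thesis unfolding exc_def \<sigma>_def[symmetric] eq A_def[symmetric] by auto
qed

lemma cyc_fix:
  assumes "\<pi> permutes {1..n}"
  shows "cyc (Suc n) \<pi> = Suc (cyc n \<pi>)"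
proof -
  have "{1..Suc n} = insert (Suc n) {1..n}" by auto
  then show ?thesis unfolding cyc_def using cyc_fix_gen[OF assms] by simp
qed

lemma cyc_ins:
  assumes "\<pi> permutes {1..n}" "m \<in> {1..n}"
  shows "cyc (Suc n) (transpose (Suc n) m \<circ> \<pi>) = cyc n \<pi>"
proof -
  interpret insctx \<pi> "{1..n}" "Suc n" m using assms by unfold_locales auto
  have "{1..Suc n} = insert (Suc n) {1..n}" by auto
  then show ?thesis unfolding cyc_def using cyc_eq unfolding \<sigma>_def by simp
qed



definition Fp :: "nat \<Rightarrow> real poly" where
  "Fp n = (\<Sum>\<pi>\<in>{\<pi>. \<pi> permutes {1..n}}. monom ((1/2) ^ cyc n \<pi>) (exc n \<pi>))"

lemma pderiv_sum: "pderiv (sum f A) = (\<Sum>x\<in>A. pderiv (f x))"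
  by (induct A rule: infinite_finite_induct) (auto simp: pderiv_add)

lemma local_id:
  fixes c :: real
  assumes "e \<le> n"
  shows "monom (c/2) e + of_nat e * monom c e + of_nat (n - e) * monom c (Suc e)
       = [:1/2, of_nat n:] * monom c e + [:0,1,-1:] * pderiv (monom c e)"
proof -
  have "poly (monom (c/2) e + of_nat e * monom c e + of_nat (n - e) * monom c (Suc e)) x
       = poly ([:1/2, of_nat n:] * monom c e + [:0,1,-1:] * pderiv (monom c e)) x" for x
  proof (cases e)
    case 0 then show ?thesis by (simp add: poly_monom pderiv_monom algebra_simps)
  next
    case (Suc k)
    then show ?thesis using assms by (simp add: poly_monom pderiv_monom of_nat_diff algebra_simps)
  qed
  then show ?thesis by (metis poly_eq_poly_eq_iff ext)
qed

lemma Fp_Suc: "Fp (Suc n) = [:1/2, of_nat n:] * Fp n + [:0,1,-1:] * pderiv (Fp n)"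
proof -
  define P where "P = {\<pi>. \<pi> permutes {1..n}}"
  define f where "f \<sigma> = monom ((1/2::real) ^ cyc (Suc n) \<sigma>) (exc (Suc n) \<sigma>)" for \<sigma>
  have ins: "{1..Suc n} = insert (Suc n) {1..n}" by auto
  have finP: "finite P" unfolding P_def by (simp add: finite_permutations)
  have "Fp (Suc n) = sum f {p. p permutes insert (Suc n) {1..n}}"
    unfolding Fp_def f_def ins ..
  also have "\<dots> = (\<Sum>b\<in>insert (Suc n) {1..n}. \<Sum>q\<in>P. f (transpose (Suc n) b \<circ> q))"
    unfolding P_def by (rule sum_over_permutations_insert) auto
  also have "\<dots> = (\<Sum>q\<in>P. f q) + (\<Sum>b\<in>{1..n}. \<Sum>q\<in>P. f (transpose (Suc n) b \<circ> q))"
    by simp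
  also have "\<dots> = (\<Sum>q\<in>P. f q + (\<Sum>b\<in>{1..n}. f (transpose (Suc n) b \<circ> q)))"
    using sum.swap[of "\<lambda>b q. f (transpose (Suc n) b \<circ> q)" P "{1..n}"] by (simp add: sum.distrib)
  also have "\<dots> = (\<Sum>q\<in>P. [:1/2, of_nat n:] * monom ((1/2) ^ cyc n q) (exc n q)
        + [:0,1,-1:] * pderiv (monom ((1/2) ^ cyc n q) (exc n q)))"
  proof (rule sum.cong[OF refl])
    fix q assume "q \<in> P"
    then have q: "q permutes {1..n}" unfolding P_def by simp
    define c where "c = (1/2::real) ^ cyc n q"
    define e where "e = exc n q"
    define A where "A = {j \<in> {1..n}. j < q j}"
    have fq: "f q = monom (c/2) e"
      unfolding f_def c_def e_def using cyc_fix[OF q] exc_fix[OF q] by simp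
    have "(\<Sum>b\<in>{1..n}. f (transpose (Suc n) b \<circ> q)) = (\<Sum>j\<in>{1..n}. f (transpose (Suc n) (q j) \<circ> q))"
    proof -
      have "bij_betw q {1..n} {1..n}" using q by (rule permutes_imp_bij)
      then show ?thesis by (rule sum.reindex_bij_betw[symmetric])
    qed
    also have "\<dots> = (\<Sum>j\<in>{1..n}. if j < q j then monom c e else monom c (Suc e))"
    proof (rule sum.cong[OF refl])
      fix j assume j: "j \<in> {1..n}"
      have "q j \<in> {1..n}" using permutes_in_image[OF q] j by blast
      then show "f (transpose (Suc n) (q j) \<circ> q) = (if j < q j then monom c e else monom c (Suc e))"
        unfolding f_def c_def e_def using cyc_ins[OF q] exc_ins[OF q j] by simp
    qed
    also have "\<dots> = of_nat (card A) * monom c e + of_nat (card ({1..n} - A)) * monom c (Suc e)"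
    proof -
      have 1: "{1..n} \<inter> {j. j < q j} = A" "{1..n} \<inter> - {j. j < q j} = {1..n} - A"
        unfolding A_def by auto
      show ?thesis by (simp only: sum.If_cases[OF finite_atLeastAtMost] 1 sum_constant)
    qed
    also have "card A = e" unfolding A_def e_def exc_def by (metis (no_types, lifting))
    also have "card ({1..n} - A) = n - e"
      using \<open>card A = e\<close> by (subst card_Diff_subset) (auto simp: A_def)
    finally have "f q + (\<Sum>b\<in>{1..n}. f (transpose (Suc n) b \<circ> q))
       = monom (c/2) e + of_nat e * monom c e + of_nat (n - e) * monom c (Suc e)"
      using fq by (simp add: comp_def)
    also have "\<dots> = [:1/2, of_nat n:] * monom c e + [:0,1,-1:] * pderiv (monom c e)"
      by (rule local_id) (simp add: e_def exc_le)
    finally show "f q + (\<Sum>b\<in>{1..n}. f (transpose (Suc n) b \<circ> q)) =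
       [:1/2, of_nat n:] * monom ((1/2) ^ cyc n q) (exc n q) + [:0,1,-1:] * pderiv (monom ((1/2) ^ cyc n q) (exc n q))"
      unfolding c_def e_def .
  qed
  also have "\<dots> = [:1/2, of_nat n:] * Fp n + [:0,1,-1:] * pderiv (Fp n)"
    unfolding Fp_def P_def[symmetric] by (simp add: sum.distrib sum_distrib_left pderiv_sum)
  finally show ?thesis .
qed

lemma Fp_0: "Fp 0 = 1"
  by (simp add: Fp_def exc_def cyc_def)

lemma poly_Fp: "poly (Fp n) x = F n x (1/2)"
  by (cases "n = 0") (auto simp: F_def Fp_def Fp_0 poly_sum poly_monom mult.commute exc_def cyc_def)



lemma binom_conv:
  fixes f :: "nat \<Rightarrow> 'a::comm_ring_1"
  shows "(\<Sum>k\<le>Suc n. of_nat (Suc (Suc n) choose k) * (f (Suc n - k) * f k))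
    = (\<Sum>k\<le>n. of_nat (Suc n choose k) * (f (Suc n - k) * f k + f (n - k) * f (Suc k))) + f 0 * f (Suc n)"
proof -
  have "(\<Sum>k\<le>Suc n. of_nat (Suc (Suc n) choose k) * (f (Suc n - k) * f k))
      = (\<Sum>k\<le>n. of_nat (Suc (Suc n) choose Suc k) * (f (n - k) * f (Suc k))) + f (Suc n) * f 0"
    by (subst sum.atMost_Suc_shift) simp
  also have "(\<Sum>k\<le>n. of_nat (Suc (Suc n) choose Suc k) * (f (n - k) * f (Suc k)))
      = (\<Sum>k\<le>n. of_nat (Suc n choose k) * (f (n - k) * f (Suc k)))
        + (\<Sum>k\<le>n. of_nat (Suc n choose Suc k) * (f (n - k) * f (Suc k)))"
    by (simp add: sum.distrib algebra_simps)
  also have "(\<Sum>k\<le>n. of_nat (Suc n choose Suc k) * (f (n - k) * f (Suc k)))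
      = (\<Sum>k\<le>Suc n. of_nat (Suc n choose k) * (f (Suc n - k) * f k)) - f (Suc n) * f 0"
  proof -
    have "(\<Sum>k\<le>Suc n. of_nat (Suc n choose k) * (f (Suc n - k) * f k))
       = f (Suc n) * f 0 + (\<Sum>k\<le>n. of_nat (Suc n choose Suc k) * (f (n - k) * f (Suc k)))"
      by (subst sum.atMost_Suc_shift) simp
    then show ?thesis by simp
  qed
  also have "(\<Sum>k\<le>Suc n. of_nat (Suc n choose k) * (f (Suc n - k) * f k))
      = (\<Sum>k\<le>n. of_nat (Suc n choose k) * (f (Suc n - k) * f k)) + f 0 * f (Suc n)"
    by (subst sum.atMost_Suc) simp
  finally show ?thesis by (simp add: sum.distrib algebra_simps)
qed

definition h :: "nat \<Rightarrow> real poly" where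
  "h n = (\<Sum>k\<le>n. of_nat (Suc n choose k) * (Fp (n - k) * Fp k))"

definition D :: "real poly \<Rightarrow> real poly" where "D p = [:0,1,-1:] * pderiv p"

lemma D_mult: "D (p * q) = p * D q + q * D p"
  unfolding D_def by (simp add: pderiv_mult distrib_left mult.left_commute)

lemma D_add: "D (p + q) = D p + D q"
  unfolding D_def by (simp add: pderiv_add distrib_left)

lemma D_sum: "D (sum f A) = (\<Sum>x\<in>A. D (f x))"
  unfolding D_def by (simp add: pderiv_sum sum_distrib_left)

lemma D_of_nat: "D (of_nat c * p) = of_nat c * D p"
proof -
  have "D (of_nat c) = 0" by (simp add: D_def)
  then show ?thesis by (simp add: D_mult)
qed

lemma D_Fp: "D (Fp m) = Fp (Suc m) - [:1/2, of_nat m:] * Fp m"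
  by (simp add: Fp_Suc D_def)

lemma ring_aux:
  fixes c c1 c2 A B X Y :: "'a::comm_ring_1"
  assumes "c = c2 + c1"
  shows "c * (A * B) + (A * (X - c1 * B) + B * (Y - c2 * A)) = Y * B + A * X"
  using assms by (simp add: algebra_simps)

lemma h_Suc: "h (Suc n) = [:1, of_nat n:] * h n + D (h n) + Fp (Suc n)"
proof -
  define L where "L = ([:1, of_nat n:] :: real poly)"
  have tm: "L * (Fp (n - k) * Fp k) + D (Fp (n - k) * Fp k)
      = Fp (Suc n - k) * Fp k + Fp (n - k) * Fp (Suc k)" if "k \<le> n" for k
  proof -
    have sp: "L = [:1/2, of_nat (n - k):] + [:1/2, of_nat k:]"
      using that by (simp add: of_nat_diff L_def)
    have "L * (Fp (n - k) * Fp k) + D (Fp (n - k) * Fp k)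
       = L * (Fp (n - k) * Fp k) + (Fp (n - k) * (Fp (Suc k) - [:1/2, of_nat k:] * Fp k)
        + Fp k * (Fp (Suc (n - k)) - [:1/2, of_nat (n - k):] * Fp (n - k)))"
      by (simp only: D_mult D_Fp)
    also have "\<dots> = Fp (Suc (n - k)) * Fp k + Fp (n - k) * Fp (Suc k)"
      by (rule ring_aux[OF sp])
    finally show ?thesis using that by (simp only: Suc_diff_le)
  qed
  have "L * h n + D (h n)
      = (\<Sum>k\<le>n. of_nat (Suc n choose k) * (L * (Fp (n - k) * Fp k) + D (Fp (n - k) * Fp k)))"
    unfolding h_def D_sum D_of_nat sum_distrib_left sum.distrib[symmetric]
    by (rule sum.cong[OF refl]) (simp only: distrib_left mult.left_commute)
  also have "\<dots> = (\<Sum>k\<le>n. of_nat (Suc n choose k) * (Fp (Suc n - k) * Fp k + Fp (n - k) * Fp (Suc k)))"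
    by (rule sum.cong[OF refl]) (simp only: tm atMost_iff)
  finally have "L * h n + D (h n) + Fp (Suc n) = h (Suc n)"
    unfolding h_def using binom_conv[where f=Fp and n=n] by (simp add: Fp_0)
  then show ?thesis unfolding L_def by simp
qed



lemma pq_closed: "pq (Suc n) = (smult (2^n) (h n), smult (2^Suc n) (Fp (Suc n)))"
proof (induction n)
  case 0
  have "Fp 1 = [:1/2:]" using Fp_Suc[of 0] by (simp add: Fp_0)
  moreover have "h 0 = 1" by (simp add: h_def Fp_0)
  ultimately show ?case by (simp add: Let_def one_pCons)
next
  case (Suc n)
  have e: "pq (Suc (Suc n)) = (smult 2 [:1, real (Suc n) - 1:] * smult (2^n) (h n)
      + smult 2 [:0,1,-1:] * pderiv (smult (2^n) (h n)) + smult (2^Suc n) (Fp (Suc n)),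
      [:1, 2 * (real (Suc n) - 1 + 1):] * smult (2^Suc n) (Fp (Suc n))
      + smult 2 [:0,1,-1:] * pderiv (smult (2^Suc n) (Fp (Suc n))))"
    using pq.simps(2)[of "Suc n"] unfolding Suc.IH Let_def fst_conv snd_conv .
  have ev: "poly (fst (pq (Suc (Suc n)))) x = poly (smult (2^Suc n) (h (Suc n))) x
        \<and> poly (snd (pq (Suc (Suc n)))) x = poly (smult (2^Suc (Suc n)) (Fp (Suc (Suc n)))) x" for x
    unfolding h_Suc Fp_Suc[of "Suc n"] D_def e fst_conv snd_conv
    by (simp add: pderiv_smult algebra_simps del: pq.simps)
  show ?case
    using ev by (metis (no_types, lifting) poly_eq_poly_eq_iff ext prod.collapse)
qed

theorem theorem3p7:
  fixes n :: nat and x :: real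
  shows "poly (p_poly n) x =
    2 ^ n * (\<Sum>k = 0..n. real (Suc n choose k) * F (n - k) x (1/2) * F k x (1/2))"
  unfolding p_poly_def pq_closed
  by (simp add: h_def poly_sum poly_Fp atLeast0AtMost mult.assoc)


end
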